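(* Let $a=\{a_1,\dots,a_m\}$ be a set of positive integers and $n\ge 0$. Then there exist a polynomial $P(k)\in\mathbb{Q}[k]$ of degree $n$ and an integer $N$ such that for every integer $k\ge N$ the number of $n$-element independent sets of $F(a,k)$ equals $P(k)$.
   Context: For a set $a=\{a_1,\dots,a_m\}$ of positive integers and a positive integer $k$, $F(a,k)$ is the simple graph with vertex set $\mathbb{Z}/k\mathbb{Z}$ in which distinct vertices $i,j$ are adjacent if and only if $i-j\equiv a_r\pmod k$ or $j-i\equiv a_r\pmod k$ for some $1\le r\le m$. An independent set is a set of vertices no two of which are adjacent. *)

theory Defs
  imports Main "HOL-Computational_Algebra.Polynomial"
begin

text \<open>The circulant graph F(a,k): vertex set Z/kZ, represented by {0..<k}.
  Distinct vertices i, j are adjacent iff i - j or j - i is congruent to some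
  element of a modulo k.\<close>

definition F_adj :: "int set \<Rightarrow> int \<Rightarrow> int \<Rightarrow> int \<Rightarrow> bool" where
  "F_adj a k i j \<longleftrightarrow> i \<noteq> j \<and>
     (\<exists>r\<in>a. (i - j) mod k = r mod k \<or> (j - i) mod k = r mod k)"

definition F_vertices :: "int \<Rightarrow> int set" where
  "F_vertices k = {0..<k}"

definition F_independent :: "int set \<Rightarrow> int \<Rightarrow> int set \<Rightarrow> bool" where
  "F_independent a k S \<longleftrightarrow> S \<subseteq> F_vertices k \<and>
     (\<forall>i\<in>S. \<forall>j\<in>S. \<not> F_adj a k i j)"

definition num_indep :: "int set \<Rightarrow> int \<Rightarrow> nat \<Rightarrow> nat" where
  "num_indep a k n = card {S. F_independent a k S \<and> card S = n}"

end

theory Submission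
  imports Defs
begin


definition bb :: "nat \<Rightarrow> rat \<Rightarrow> rat" where
  "bb j x = (\<Prod>i<j. (x - of_nat i)) / fact j"

lemma bb_0[simp]: "bb 0 x = 1" by (simp add: bb_def)

lemma bb_pascal: "bb (Suc j) (x + 1) - bb (Suc j) x = bb j x"
proof -
  have e1: "(\<Prod>i<Suc j. (x + 1 - of_nat i)) = (x+1) * (\<Prod>i<j. (x - of_nat i))"
    by (subst prod.lessThan_Suc_shift) (simp add: algebra_simps)
  have e2: "(\<Prod>i<Suc j. (x - of_nat i)) = (\<Prod>i<j. (x - of_nat i)) * (x - of_nat j)"
    by simp
  have "bb (Suc j) (x + 1) - bb (Suc j) x
     = ((x+1) * (\<Prod>i<j. (x - of_nat i)) - (\<Prod>i<j. (x - of_nat i)) * (x - of_nat j)) / fact (Suc j)"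
    unfolding bb_def e1 e2 by (simp add: diff_divide_distrib)
  also have "\<dots> = (of_nat (Suc j) * (\<Prod>i<j. (x - of_nat i))) / (of_nat (Suc j) * fact j)"
    by (simp add: algebra_simps)
  also have "\<dots> = bb j x" unfolding bb_def
    by (metis (no_types, lifting) mult_divide_mult_cancel_left_if of_nat_eq_0_iff nat.simps(3))
  finally show ?thesis .
qed

lemma bb_sum0:
  fixes N K :: int
  shows "N - 1 \<le> K \<Longrightarrow> (\<Sum>x\<in>{N..K}. bb j (of_int x)) = bb (Suc j) (of_int K + 1) - bb (Suc j) (of_int N)"
proof (induction K rule: int_ge_induct)
  case base
  then show ?case by simp
next
  case (step i)
  have "{N..i+1} = insert (i+1) {N..i}" using step by auto
  then have "(\<Sum>x\<in>{N..i+1}. bb j (of_int x)) = bb j (of_int i + 1) + (\<Sum>x\<in>{N..i}. bb j (of_int x))"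
    by simp
  also have "\<dots> = bb (Suc j) (of_int (i+1) + 1) - bb (Suc j) (of_int N)"
    using step bb_pascal[of j "of_int i + 1"] by (simp add: algebra_simps)
  finally show ?case .
qed

lemma bb_sum:
  fixes N K :: int
  assumes "N \<le> K + 1"
  shows "(\<Sum>x\<in>{N..K}. bb j (of_int x)) = bb (Suc j) (of_int K + 1) - bb (Suc j) (of_int N)"
  using bb_sum0[of N K j] assms by simp

definition rep :: "(int \<Rightarrow> rat) \<Rightarrow> (nat \<Rightarrow> rat) \<Rightarrow> nat \<Rightarrow> bool" where
  "rep f c D \<longleftrightarrow> (\<forall>j\<ge>D. c j = 0) \<and> (\<exists>N s. \<forall>k\<ge>N. f k = (\<Sum>j<D. c j * bb j (of_int (k - s))))"

lemma rep_shift: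
  assumes "rep f c D"
  shows "rep (\<lambda>k. f (k - v)) c D"
proof -
  obtain N s where N: "\<forall>k\<ge>N. f k = (\<Sum>j<D. c j * bb j (of_int (k - s)))" and z: "\<forall>j\<ge>D. c j = 0"
    using assms unfolding rep_def by auto
  show ?thesis unfolding rep_def
  proof (intro conjI exI allI impI)
    show "\<And>j. D \<le> j \<Longrightarrow> c j = 0" using z by auto
    fix k assume "N + v \<le> k"
    then show "f (k - v) = (\<Sum>j<D. c j * bb j (of_int (k - (s + v))))"
      using N[rule_format, of "k - v"] by (simp add: algebra_simps)
  qed
qed


lemma shift_sum_int:
  fixes A B s :: int
  shows "(\<Sum>x\<in>{A..B}. h (x - s)) = (\<Sum>y\<in>{A-s..B-s}. h y)"
  by (rule sum.reindex_bij_witness[of _ "\<lambda>y. y + s" "\<lambda>x. x - s"]) auto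

lemma rev_sum_int:
  fixes m k :: int
  shows "(\<Sum>g\<in>{m+1..k}. q (k - g)) = (\<Sum>x\<in>{0..k-m-1}. q x)"
  by (rule sum.reindex_bij_witness[of _ "\<lambda>x. k - x" "\<lambda>g. k - g"]) auto

lemma rep_sumop:
  fixes m :: int
  assumes "rep q c D" "0 \<le> m" "\<forall>x\<ge>0. 0 \<le> q x"
  shows "\<exists>c'. rep (\<lambda>k. \<Sum>g\<in>{m+1..k}. q (k - g)) c' (Suc D) \<and> (0 < D \<longrightarrow> c' D = c (D - 1))
           \<and> (D = 0 \<longrightarrow> 0 < q 0 \<longrightarrow> 0 < c' 0)"
proof -
  obtain N s where N: "\<forall>k\<ge>N. q k = (\<Sum>j<D. c j * bb j (of_int (k - s)))" and z: "\<forall>j\<ge>D. c j = 0"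
    using assms unfolding rep_def by auto
  define N1 where "N1 = max N 1"
  define C where "C = (\<Sum>x\<in>{0..N1-1}. q x) - (\<Sum>j<D. c j * bb (Suc j) (of_int (N1 - s)))"
  define c' where "c' = (\<lambda>j. case j of 0 \<Rightarrow> C | Suc i \<Rightarrow> c i)"
  have main: "(\<Sum>g\<in>{m+1..k}. q (k - g)) = (\<Sum>j<Suc D. c' j * bb j (of_int (k - (m + s))))"
    if k: "N1 + m + 1 \<le> k" for k
  proof -
    have "(\<Sum>g\<in>{m+1..k}. q (k - g)) = (\<Sum>x\<in>{0..k-m-1}. q x)" by (rule rev_sum_int)
    also have "{0..k-m-1} = {0..N1-1} \<union> {N1..k-m-1}" using k N1_def by auto
    also have "(\<Sum>x\<in>{0..N1-1} \<union> {N1..k-m-1}. q x) = (\<Sum>x\<in>{0..N1-1}. q x) + (\<Sum>x\<in>{N1..k-m-1}. q x)"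
      by (rule sum.union_disjoint) auto
    also have "(\<Sum>x\<in>{N1..k-m-1}. q x) = (\<Sum>x\<in>{N1..k-m-1}. \<Sum>j<D. c j * bb j (of_int (x - s)))"
      using N N1_def by (intro sum.cong) auto
    also have "\<dots> = (\<Sum>j<D. c j * (\<Sum>x\<in>{N1..k-m-1}. bb j (of_int (x - s))))"
      by (subst sum.swap) (simp add: sum_distrib_left)
    also have "\<dots> = (\<Sum>j<D. c j * (bb (Suc j) (of_int (k - (m + s))) - bb (Suc j) (of_int (N1 - s))))"
    proof (intro sum.cong refl)
      fix j
      have "(\<Sum>x\<in>{N1..k-m-1}. bb j (of_int (x - s))) = (\<Sum>y\<in>{N1-s..k-m-1-s}. bb j (of_int y))"
        using shift_sum_int[of "\<lambda>y. bb j (of_int y)"] by simp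
      also have "\<dots> = bb (Suc j) (of_int (k-m-1-s) + 1) - bb (Suc j) (of_int (N1 - s))"
        by (rule bb_sum) (use k in auto)
      finally show "c j * (\<Sum>x\<in>{N1..k-m-1}. bb j (of_int (x - s))) = c j * (bb (Suc j) (of_int (k - (m + s))) - bb (Suc j) (of_int (N1 - s)))"
        by (simp add: algebra_simps) (metis distrib_left)
    qed
    finally have "(\<Sum>g\<in>{m+1..k}. q (k - g)) = C + (\<Sum>j<D. c j * bb (Suc j) (of_int (k - (m + s))))"
      unfolding C_def by (simp add: algebra_simps sum_subtractf)
    also have "\<dots> = (\<Sum>j<Suc D. c' j * bb j (of_int (k - (m + s))))"
      unfolding c'_def by (subst sum.lessThan_Suc_shift) simp
    finally show ?thesis .
  qed
  have r: "rep (\<lambda>k. \<Sum>g\<in>{m+1..k}. q (k - g)) c' (Suc D)"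
    unfolding rep_def
  proof (intro conjI exI allI impI)
    show "c' j = 0" if "Suc D \<le> j" for j using that z unfolding c'_def by (cases j) auto
    fix k assume "N1 + m + 1 \<le> k"
    then show "(\<Sum>g\<in>{m+1..k}. q (k - g)) = (\<Sum>j<Suc D. c' j * bb j (of_int (k - (m + s))))"
      by (rule main)
  qed
  moreover have "0 < D \<longrightarrow> c' D = c (D - 1)" unfolding c'_def by (cases D) auto
  moreover have "0 < c' 0" if "D = 0" "0 < q 0"
  proof -
    have "0 < (\<Sum>x\<in>{0..N1-1}. q x)"
    proof -
      have "q 0 \<le> (\<Sum>x\<in>{0..N1-1}. q x)"
        by (rule member_le_sum) (use assms(3) N1_def in auto)
      then show ?thesis using that by simp
    qed
    then show ?thesis using that unfolding c'_def C_def by simp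
  qed
  ultimately show ?thesis by blast
qed


definition Bp :: "nat \<Rightarrow> rat poly" where
  "Bp j = smult (1 / fact j) (\<Prod>i<j. [:- of_nat i, 1:])"

lemma poly_Bp: "poly (Bp j) x = bb j x"
  by (simp add: Bp_def bb_def poly_prod)

lemma Bp_nz: "Bp j \<noteq> 0"
  unfolding Bp_def by (simp add: prod_zero_iff)

lemma degree_Bp: "degree (Bp j) = j"
proof -
  have "degree (\<Prod>i<j. [:- of_nat i, 1::rat:]) = (\<Sum>i<j. degree [:- of_nat i, 1::rat:])"
    by (rule degree_prod_eq_sum_degree) auto
  then show ?thesis unfolding Bp_def by simp
qed

definition Bs :: "int \<Rightarrow> nat \<Rightarrow> rat poly" where
  "Bs s j = pcompose (Bp j) [:- of_int s, 1:]"

lemma poly_Bs: "poly (Bs s j) (of_int k) = bb j (of_int (k - s))"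
  by (simp add: Bs_def poly_pcompose poly_Bp)

lemma degree_Bs: "degree (Bs s j) = j"
  by (simp add: Bs_def degree_pcompose degree_Bp)

lemma Bs_nz: "Bs s j \<noteq> 0"
proof
  assume "Bs s j = 0"
  then have "poly (Bs s j) (of_int (s + (-1))) = 0" by simp
  moreover have "poly (Bs s j) (of_int (s + (-1))) = poly (Bp j) (-1)"
    by (simp add: Bs_def poly_pcompose)
  moreover have "poly (Bp j) (-1) \<noteq> 0"
    by (simp add: poly_Bp bb_def prod_zero_iff)
  ultimately show False by simp
qed

lemma add_deg:
  fixes p q :: "rat poly"
  assumes "p = 0 \<or> degree p < degree q" "q \<noteq> 0"
  shows "degree (p + q) = degree q \<and> p + q \<noteq> 0"
  using assms
proof (cases "p = 0")
  case False
  then have d: "degree (p + q) = degree q" using assms by (simp add: degree_add_eq_right)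
  have "p + q \<noteq> 0"
  proof
    assume "p + q = 0"
    then have "degree q = 0" using d by simp
    then show False using assms False by simp
  qed
  then show ?thesis using d by simp
qed simp

lemma deg_sum_le:
  fixes Q :: "nat \<Rightarrow> rat poly"
  assumes "\<forall>j. degree (Q j) = j"
  shows "degree (\<Sum>j<D. smult (c j) (Q j)) \<le> D - 1"
  by (rule degree_sum_le) (use assms in \<open>auto intro: order.trans[OF degree_smult_le]\<close>)

lemma deg_sum_top:
  fixes Q :: "nat \<Rightarrow> rat poly"
  assumes "\<forall>j. degree (Q j) = j" "\<forall>j. Q j \<noteq> 0" "c d \<noteq> 0"
  shows "degree (\<Sum>j<Suc d. smult (c j) (Q j)) = d \<and> (\<Sum>j<Suc d. smult (c j) (Q j)) \<noteq> 0"
proof -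
  let ?p = "\<Sum>j<d. smult (c j) (Q j)"
  let ?q = "smult (c d) (Q d)"
  have q: "?q \<noteq> 0" "degree ?q = d" using assms by auto
  have "?p = 0 \<or> degree ?p < degree ?q"
  proof (cases d)
    case 0 then show ?thesis by simp
  next
    case (Suc d')
    then have "degree ?p \<le> d - 1" using deg_sum_le[OF assms(1)] by blast
    then show ?thesis using q Suc by simp
  qed
  from add_deg[OF this q(1)] q show ?thesis by simp
qed

lemma rep_poly:
  assumes "rep f c D"
  shows "\<exists>P. (\<exists>N. \<forall>k\<ge>N. f k = poly P (of_int k)) \<and> degree P \<le> D - 1 \<and> (D = 0 \<longrightarrow> P = 0)
           \<and> (0 < D \<and> c (D - 1) \<noteq> 0 \<longrightarrow> degree P = D - 1 \<and> P \<noteq> 0)"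
proof -
  obtain N s where N: "\<forall>k\<ge>N. f k = (\<Sum>j<D. c j * bb j (of_int (k - s)))"
    using assms unfolding rep_def by auto
  define P where "P = (\<Sum>j<D. smult (c j) (Bs s j))"
  have "\<forall>k\<ge>N. f k = poly P (of_int k)"
    using N by (simp add: P_def poly_sum poly_Bs)
  moreover have "degree P \<le> D - 1" unfolding P_def
    by (rule deg_sum_le) (simp add: degree_Bs)
  moreover have "D = 0 \<longrightarrow> P = 0" by (simp add: P_def)
  moreover have "degree P = D - 1 \<and> P \<noteq> 0" if h: "0 < D" "c (D - 1) \<noteq> 0"
  proof -
    obtain d where d: "D = Suc d" using h by (cases D) auto
    show ?thesis using deg_sum_top[of "Bs s" c d] h d by (simp add: P_def degree_Bs Bs_nz)
  qed
  ultimately show ?thesis by blast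
qed




primrec cnt :: "int \<Rightarrow> int option list \<Rightarrow> int \<Rightarrow> nat" where
  "cnt m [] k = (if k = 0 then 1 else 0)"
| "cnt m (x # t) k = (case x of Some v \<Rightarrow> cnt m t (k - v) | None \<Rightarrow> (\<Sum>g\<in>{m+1..k}. cnt m t (k - g)))"

definition nN :: "int option list \<Rightarrow> nat" where
  "nN t = length (filter (\<lambda>x. x = None) t)"

definition okT :: "int option list \<Rightarrow> bool" where
  "okT t \<longleftrightarrow> (\<forall>v. Some v \<in> set t \<longrightarrow> 0 \<le> v)"

lemma cnt_rep:
  fixes m :: int
  assumes "okT t" "0 \<le> m"
  shows "\<exists>c. rep (\<lambda>k. of_nat (cnt m t k)) c (nN t) \<and> (t \<noteq> [] \<and> set t \<subseteq> {None} \<longrightarrow> 0 < c (nN t - 1))"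
  using assms(1)
proof (induction t)
  case Nil
  have "rep (\<lambda>k. of_nat (cnt m [] k)) (\<lambda>_. 0) 0"
    unfolding rep_def by (intro conjI exI[of _ 1] exI[of _ 0]) auto
  then show ?case by (auto simp: nN_def)
next
  case (Cons x t)
  have okt: "okT t" using Cons.prems by (auto simp: okT_def)
  obtain c where c: "rep (\<lambda>k. of_nat (cnt m t k)) c (nN t)"
    and top: "t \<noteq> [] \<and> set t \<subseteq> {None} \<longrightarrow> 0 < c (nN t - 1)"
    using Cons.IH[OF okt] by blast
  show ?case
  proof (cases x)
    case None
    have q: "\<forall>x\<ge>0. 0 \<le> (of_nat (cnt m t x)::rat)" by simp
    obtain c' where c'all: "rep (\<lambda>k. \<Sum>g\<in>{m+1..k}. (of_nat (cnt m t (k - g))::rat)) c' (Suc (nN t))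
      \<and> (0 < nN t \<longrightarrow> c' (nN t) = c (nN t - 1))
      \<and> (nN t = 0 \<longrightarrow> 0 < (of_nat (cnt m t 0)::rat) \<longrightarrow> 0 < c' 0)"
      using rep_sumop[OF c assms(2) q] by (rule exE)
    note c' = conjunct1[OF c'all]
    note t1 = conjunct1[OF conjunct2[OF c'all]]
    note t2 = conjunct2[OF conjunct2[OF c'all]]
    have fe: "(\<lambda>k. (of_nat (cnt m (x # t) k)::rat)) = (\<lambda>k. \<Sum>g\<in>{m+1..k}. (of_nat (cnt m t (k - g))::rat))"
      using None by (simp add: of_nat_sum)
    have nn: "nN (x # t) = Suc (nN t)" using None by (simp add: nN_def)
    have pos: "0 < c' (nN t)" if st: "set t \<subseteq> {None}"
    proof (cases "t = []")
      case True
      then show ?thesis using t2 by (simp add: nN_def)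
    next
      case False
      have "filter (\<lambda>x. x = None) t = t" using st by (intro filter_True) auto
      then have "nN t = length t" unfolding nN_def by simp
      then have "0 < nN t" using False by simp
      then show ?thesis using t1 top st False by simp
    qed
    have "rep (\<lambda>k. of_nat (cnt m (x # t) k)) c' (nN (x # t))" using c' fe nn by simp
    moreover have "0 < c' (nN (x # t) - 1)" if "x # t \<noteq> [] \<and> set (x # t) \<subseteq> {None}"
      using pos that nn by simp
    ultimately show ?thesis by blast
  next
    case (Some v)
    have "rep (\<lambda>k. of_nat (cnt m t (k - v))) c (nN t)" using rep_shift[OF c] by simp
    moreover have "nN (x # t) = nN t" using Some by (simp add: nN_def)
    ultimately show ?thesis using Some by auto
  qed
qed

definition matchT :: "int \<Rightarrow> int option \<Rightarrow> int \<Rightarrow> bool" where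
  "matchT m x g = (case x of None \<Rightarrow> m < g | Some v \<Rightarrow> g = v)"

definition E :: "int \<Rightarrow> int option list \<Rightarrow> int \<Rightarrow> int list set" where
  "E m t k = {gs. length gs = length t \<and> (\<forall>l<length t. matchT m (t!l) (gs!l)) \<and> sum_list gs = k}"

lemma E_Nil: "E m [] k = (if k = 0 then {[]} else {})"
  by (auto simp: E_def)

lemma E_Cons_mem: "g # gs' \<in> E m (x # t) k \<longleftrightarrow> matchT m x g \<and> gs' \<in> E m t (k - g)"
  unfolding E_def by (auto simp: All_less_Suc2)

lemma E_Cons: "E m (x # t) k = (\<Union>g\<in>{g. matchT m x g}. (#) g ` E m t (k - g))"
proof (intro set_eqI iffI)
  fix gs assume h: "gs \<in> E m (x # t) k"
  then obtain g gs' where gs: "gs = g # gs'" unfolding E_def by (cases gs) auto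
  show "gs \<in> (\<Union>g\<in>{g. matchT m x g}. (#) g ` E m t (k - g))"
    using h E_Cons_mem[of g gs' m x t k] unfolding gs by blast
next
  fix gs assume "gs \<in> (\<Union>g\<in>{g. matchT m x g}. (#) g ` E m t (k - g))"
  then obtain g gs' where "matchT m x g" "gs' \<in> E m t (k - g)" "gs = g # gs'" by auto
  then show "gs \<in> E m (x # t) k" using E_Cons_mem by blast
qed

lemma E_nonneg:
  assumes "okT t" "0 \<le> m" "gs \<in> E m t k"
  shows "0 \<le> k"
proof -
  have "\<forall>g\<in>set gs. 0 \<le> g"
  proof
    fix g assume "g \<in> set gs"
    then obtain l where l: "l < length gs" "gs ! l = g" by (auto simp: in_set_conv_nth)
    then have "matchT m (t!l) g" "l < length t" using assms(3) by (auto simp: E_def)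
    then show "0 \<le> g" using assms(1,2) nth_mem[of l t]
      by (cases "t!l") (auto simp: matchT_def okT_def)
  qed
  then have "0 \<le> sum_list gs" by (simp add: sum_list_nonneg)
  then show ?thesis using assms(3) by (simp add: E_def)
qed

lemma E_card:
  fixes m :: int
  assumes "okT t" "0 \<le> m"
  shows "finite (E m t k) \<and> card (E m t k) = cnt m t k"
  using assms(1)
proof (induction t arbitrary: k)
  case Nil
  then show ?case by (simp add: E_Nil)
next
  case (Cons x t)
  have okt: "okT t" using Cons.prems by (auto simp: okT_def)
  note IH = Cons.IH[OF okt]
  show ?case
  proof (cases x)
    case None
    have "E m (x # t) k = (\<Union>g\<in>{m+1..k}. (#) g ` E m t (k - g))"
    proof -
      have le: "g \<le> k" if "gs' \<in> E m t (k - g)" for g gs'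
        using E_nonneg[OF okt assms(2) that] by simp
      have "(\<Union>g\<in>{g. matchT m x g}. (#) g ` E m t (k - g)) = (\<Union>g\<in>{m+1..k}. (#) g ` E m t (k - g))"
      proof (intro set_eqI iffI)
        fix y assume "y \<in> (\<Union>g\<in>{g. matchT m x g}. (#) g ` E m t (k - g))"
        then obtain g gs' where "matchT m x g" "gs' \<in> E m t (k - g)" "y = g # gs'" by auto
        then show "y \<in> (\<Union>g\<in>{m+1..k}. (#) g ` E m t (k - g))"
          using le None by (auto simp: matchT_def)
      next
        fix y assume "y \<in> (\<Union>g\<in>{m+1..k}. (#) g ` E m t (k - g))"
        then obtain g gs' where "g \<in> {m+1..k}" "gs' \<in> E m t (k - g)" "y = g # gs'" by auto
        then show "y \<in> (\<Union>g\<in>{g. matchT m x g}. (#) g ` E m t (k - g))"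
          using None by (auto simp: matchT_def intro!: exI[of _ g])
      qed
      then show ?thesis by (simp add: E_Cons)
    qed
    moreover have "card (\<Union>g\<in>{m+1..k}. (#) g ` E m t (k - g)) = (\<Sum>g\<in>{m+1..k}. card ((#) g ` E m t (k - g)))"
      by (rule card_UN_disjoint) (use IH in auto)
    moreover have "finite (\<Union>g\<in>{m+1..k}. (#) g ` E m t (k - g))" using IH by auto
    ultimately show ?thesis using None IH by (simp add: card_image)
  next
    case (Some v)
    have "E m (x # t) k = (#) v ` E m t (k - v)"
      by (simp add: E_Cons Some matchT_def)
    then show ?thesis using Some IH by (simp add: card_image)
  qed
qed




definition rot :: "int \<Rightarrow> int \<Rightarrow> int set \<Rightarrow> int set" where
  "rot k t S = (\<lambda>y. (y + t) mod k) ` S"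

lemma rot_sub: "0 < k \<Longrightarrow> rot k t S \<subseteq> {0..<k}"
  by (auto simp: rot_def)

lemma rot_inj: fixes k t :: int shows "0 < k \<Longrightarrow> inj_on (\<lambda>y. (y + t) mod k) {0..<k}"
proof (rule inj_onI)
  fix x y assume k: "0 < k" and xy: "x \<in> {0..<k}" "y \<in> {0..<k}" "(x + t) mod k = (y + t) mod k"
  then have "((x + t) mod k - t) mod k = ((y + t) mod k - t) mod k" by simp
  then have "x mod k = y mod k" by (simp add: mod_diff_left_eq)
  then show "x = y" using xy by simp
qed

lemma rot_rot: "0 < k \<Longrightarrow> S \<subseteq> {0..<k} \<Longrightarrow> rot k (-t) (rot k t S) = S"
proof -
  assume k: "0 < k" and S: "S \<subseteq> {0..<k}"
  have "rot k (-t) (rot k t S) = (\<lambda>y. ((y + t) mod k + - t) mod k) ` S"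
    by (simp add: rot_def image_image)
  also have "\<dots> = (\<lambda>y. y) ` S"
  proof (rule image_cong[OF refl])
    fix y assume "y \<in> S"
    then have "0 \<le> y" "y < k" using S by auto
    then show "((y + t) mod k + - t) mod k = y" by (simp add: mod_diff_left_eq)
  qed
  finally show ?thesis by simp
qed

lemma rot_card: "0 < k \<Longrightarrow> S \<subseteq> {0..<k} \<Longrightarrow> card (rot k t S) = card S"
  unfolding rot_def by (rule card_image) (rule inj_on_subset[OF rot_inj])

lemma rot_adj:
  assumes "0 < k" "i \<in> {0..<k}" "j \<in> {0..<k}"
  shows "F_adj a k ((i + t) mod k) ((j + t) mod k) \<longleftrightarrow> F_adj a k i j"
proof -
  have ne: "((i + t) mod k \<noteq> (j + t) mod k) \<longleftrightarrow> i \<noteq> j"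
    using rot_inj[OF assms(1), of t] assms(2,3) by (auto dest: inj_onD)
  have d1: "((i + t) mod k - (j + t) mod k) mod k = (i - j) mod k"
    by (simp add: mod_diff_eq)
  have d2: "((j + t) mod k - (i + t) mod k) mod k = (j - i) mod k"
    by (simp add: mod_diff_eq)
  show ?thesis unfolding F_adj_def ne d1 d2 ..
qed

lemma rot_indep:
  assumes "0 < k" "F_independent a k S"
  shows "F_independent a k (rot k t S)"
proof -
  have S: "S \<subseteq> {0..<k}" using assms by (simp add: F_independent_def F_vertices_def)
  show ?thesis unfolding F_independent_def F_vertices_def
  proof (intro conjI ballI)
    show "rot k t S \<subseteq> {0..<k}" by (rule rot_sub[OF assms(1)])
    fix x y assume "x \<in> rot k t S" "y \<in> rot k t S"
    then obtain i j where ij: "i \<in> S" "j \<in> S" "x = (i + t) mod k" "y = (j + t) mod k"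
      by (auto simp: rot_def)
    have "i \<in> {0..<k}" "j \<in> {0..<k}" using ij S by auto
    then have "F_adj a k x y \<longleftrightarrow> F_adj a k i j" using rot_adj[OF assms(1)] ij by simp
    then show "\<not> F_adj a k x y"
      using ij assms(2) by (auto simp: F_independent_def)
  qed
qed

definition hh :: "int set \<Rightarrow> int \<Rightarrow> nat \<Rightarrow> nat" where
  "hh a k n = card {S. F_independent a k S \<and> card S = n \<and> 0 \<in> S}"

lemma indep_sub: "F_independent a k S \<Longrightarrow> S \<subseteq> {0..<k}"
  by (simp add: F_independent_def F_vertices_def)

lemma fiber_card:
  assumes k: "0 < k" and x: "x \<in> {0..<k}"
  shows "card {S. F_independent a k S \<and> card S = n \<and> x \<in> S} = hh a k n"
  unfolding hh_def
proof (rule bij_betw_same_card[of "rot k (-x)"], rule bij_betw_byWitness[where f'="rot k x"])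
  show "\<forall>S\<in>{S. F_independent a k S \<and> card S = n \<and> x \<in> S}. rot k x (rot k (- x) S) = S"
  proof
    fix S assume "S \<in> {S. F_independent a k S \<and> card S = n \<and> x \<in> S}"
    then have "S \<subseteq> {0..<k}" using indep_sub by auto
    from rot_rot[OF k this, of "-x"] show "rot k x (rot k (- x) S) = S" by simp
  qed
  show "\<forall>S\<in>{S. F_independent a k S \<and> card S = n \<and> 0 \<in> S}. rot k (- x) (rot k x S) = S"
  proof
    fix S assume "S \<in> {S. F_independent a k S \<and> card S = n \<and> 0 \<in> S}"
    then have "S \<subseteq> {0..<k}" using indep_sub by auto
    from rot_rot[OF k this, of "x"] show "rot k (- x) (rot k x S) = S" by simp
  qed
  show "rot k (- x) ` {S. F_independent a k S \<and> card S = n \<and> x \<in> S}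
    \<subseteq> {S. F_independent a k S \<and> card S = n \<and> 0 \<in> S}"
  proof safe
    fix S assume S: "F_independent a k S" "x \<in> S" "n = card S"
    show "F_independent a k (rot k (- x) S)" by (rule rot_indep[OF k S(1)])
    show "card (rot k (- x) S) = card S" by (rule rot_card[OF k indep_sub[OF S(1)]])
    show "0 \<in> rot k (- x) S" unfolding rot_def using S(2) by (intro image_eqI[of _ _ x]) auto
  qed
  show "rot k x ` {S. F_independent a k S \<and> card S = n \<and> 0 \<in> S}
    \<subseteq> {S. F_independent a k S \<and> card S = n \<and> x \<in> S}"
  proof safe
    fix S assume S: "F_independent a k S" "0 \<in> S" "n = card S"
    show "F_independent a k (rot k x S)" by (rule rot_indep[OF k S(1)])
    show "card (rot k x S) = card S" by (rule rot_card[OF k indep_sub[OF S(1)]])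
    show "x \<in> rot k x S" unfolding rot_def using S(2) x by (intro image_eqI[of _ _ 0]) auto
  qed
qed

lemma rotation_count:
  assumes k: "0 < k"
  shows "n * num_indep a k n = nat k * hh a k n"
proof -
  define X where "X = {S. F_independent a k S \<and> card S = n}"
  have finX: "finite X"
    by (rule finite_subset[of _ "Pow {0..<k}"]) (auto simp: X_def dest: indep_sub)
  have "n * card X = (\<Sum>S\<in>X. card S)" by (simp add: X_def)
  also have "\<dots> = (\<Sum>S\<in>X. \<Sum>x\<in>{0..<k}. if x \<in> S then 1 else 0)"
  proof (rule sum.cong[OF refl])
    fix S assume "S \<in> X"
    then have "S \<subseteq> {0..<k}" unfolding X_def using indep_sub by blast
    then have "{x\<in>{0..<k}. x \<in> S} = S" by auto
    moreover have "(\<Sum>x\<in>{x\<in>{0..<k}. x \<in> S}. (1::nat)) = (\<Sum>x\<in>{0..<k}. if x \<in> S then 1 else 0)"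
      by (rule sum.inter_filter) simp
    ultimately show "card S = (\<Sum>x\<in>{0..<k}. if x \<in> S then 1 else 0)" by simp
  qed
  also have "\<dots> = (\<Sum>x\<in>{0..<k}. \<Sum>S\<in>X. if x \<in> S then 1 else 0)" by (rule sum.swap)
  also have "\<dots> = (\<Sum>x\<in>{0..<k}. card {S\<in>X. x \<in> S})"
  proof (rule sum.cong[OF refl])
    fix x
    have "(\<Sum>S\<in>{S\<in>X. x \<in> S}. (1::nat)) = (\<Sum>S\<in>X. if x \<in> S then 1 else 0)"
      by (rule sum.inter_filter) (rule finX)
    then show "(\<Sum>S\<in>X. if x \<in> S then 1 else 0) = card {S\<in>X. x \<in> S}" by simp
  qed
  also have "\<dots> = (\<Sum>x\<in>{0..<k}. hh a k n)"
  proof (rule sum.cong[OF refl])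
    fix x assume "x \<in> {0..<k}"
    have "{S\<in>X. x \<in> S} = {S. F_independent a k S \<and> card S = n \<and> x \<in> S}" by (auto simp: X_def)
    then show "card {S\<in>X. x \<in> S} = hh a k n" using fiber_card[OF k \<open>x \<in> {0..<k}\<close>] by simp
  qed
  also have "\<dots> = nat k * hh a k n" by simp
  finally show ?thesis by (simp add: num_indep_def X_def)
qed




definition ps :: "int list \<Rightarrow> nat \<Rightarrow> int" where
  "ps gs j = sum_list (take j gs)"

lemma ps_0[simp]: "ps gs 0 = 0" by (simp add: ps_def)

lemma ps_Suc: "j < length gs \<Longrightarrow> ps gs (Suc j) = ps gs j + gs ! j"
  by (simp add: ps_def take_Suc_conv_app_nth)

lemma ps_len: "ps gs (length gs) = sum_list gs" by (simp add: ps_def)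

lemma ps_mono:
  assumes pos: "\<forall>g\<in>set gs. 0 < g"
  shows "i < j \<Longrightarrow> j \<le> length gs \<Longrightarrow> ps gs i < ps gs j"
proof (induction j)
  case 0 then show ?case by simp
next
  case (Suc j)
  have "0 < gs ! j" using pos Suc.prems by auto
  then have "ps gs j < ps gs (Suc j)" using ps_Suc[of j gs] Suc.prems by simp
  show ?case
  proof (cases "i < j")
    case True then show ?thesis using Suc \<open>ps gs j < ps gs (Suc j)\<close> by auto
  next
    case False then have "i = j" using Suc.prems by simp
    then show ?thesis using \<open>ps gs j < ps gs (Suc j)\<close> by simp
  qed
qed

lemma ps_nonneg:
  assumes pos: "\<forall>g\<in>set gs. 0 < g" "j \<le> length gs"
  shows "0 \<le> ps gs j"
  using ps_mono[OF pos(1), of 0 j] pos(2) by (cases j) auto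

definition phi :: "int list \<Rightarrow> int set" where
  "phi gs = ps gs ` {..<length gs}"

definition psi :: "int \<Rightarrow> int set \<Rightarrow> int list" where
  "psi k S = (let xs = sorted_list_of_set S; ys = xs @ [k] in map (\<lambda>j. ys ! Suc j - ys ! j) [0..<length xs])"

definition GG :: "nat \<Rightarrow> int \<Rightarrow> int list set" where
  "GG n k = {gs. length gs = n \<and> (\<forall>g\<in>set gs. 0 < g) \<and> sum_list gs = k}"

definition H0 :: "nat \<Rightarrow> int \<Rightarrow> int set set" where
  "H0 n k = {S. S \<subseteq> {0..<k} \<and> card S = n \<and> 0 \<in> S}"

lemma sorted_phi:
  assumes pos: "\<forall>g\<in>set gs. 0 < g"
  shows "sorted_list_of_set (phi gs) = map (ps gs) [0..<length gs]"
proof -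
  have inj: "inj_on (ps gs) {..<length gs}"
  proof (rule inj_onI)
    fix i j assume "i \<in> {..<length gs}" "j \<in> {..<length gs}" "ps gs i = ps gs j"
    then show "i = j" using ps_mono[OF pos, of i j] ps_mono[OF pos, of j i]
      by (cases "i < j"; cases "j < i") auto
  qed
  have "sorted_wrt (<) (map (ps gs) [0..<length gs])"
    unfolding sorted_wrt_iff_nth_less using ps_mono[OF pos] by auto
  moreover have "set (map (ps gs) [0..<length gs]) = phi gs"
    by (auto simp: phi_def)
  moreover have "length (map (ps gs) [0..<length gs]) = card (phi gs)"
    using card_image[OF inj] by (simp add: phi_def)
  moreover have "finite (phi gs)" by (simp add: phi_def)
  ultimately show ?thesis
    using sorted_list_of_set_unique[of "phi gs" "map (ps gs) [0..<length gs]"] by blast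
qed

lemma psi_phi:
  assumes "gs \<in> GG n k"
  shows "psi k (phi gs) = gs"
proof -
  have pos: "\<forall>g\<in>set gs. 0 < g" and len: "length gs = n" and sm: "sum_list gs = k"
    using assms by (auto simp: GG_def)
  let ?ys = "map (ps gs) [0..<n] @ [k]"
  have ys: "?ys ! j = ps gs j" if "j \<le> n" for j
    using that len sm ps_len[of gs] by (cases "j = n") (auto simp: nth_append)
  have "psi k (phi gs) = map (\<lambda>j. ?ys ! Suc j - ?ys ! j) [0..<n]"
    unfolding psi_def sorted_phi[OF pos] Let_def using len by simp
  also have "\<dots> = map (\<lambda>j. gs ! j) [0..<n]"
    by (rule map_cong[OF refl]) (use ys ps_Suc len in auto)
  also have "\<dots> = gs" using len map_nth[of gs] by simp
  finally show ?thesis .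
qed

lemma phi_H0:
  assumes "gs \<in> GG n k" "0 < n"
  shows "phi gs \<in> H0 n k"
proof -
  have pos: "\<forall>g\<in>set gs. 0 < g" and len: "length gs = n" and sm: "sum_list gs = k"
    using assms by (auto simp: GG_def)
  have "phi gs \<subseteq> {0..<k}"
  proof
    fix x assume "x \<in> phi gs"
    then obtain j where j: "j < n" "x = ps gs j" by (auto simp: phi_def len)
    have "ps gs j < ps gs n" using ps_mono[OF pos, of j n] j len by simp
    then show "x \<in> {0..<k}" using j ps_nonneg[OF pos, of j] len sm ps_len[of gs] by auto
  qed
  moreover have "card (phi gs) = n"
    using arg_cong[OF sorted_phi[OF pos], of length] len by simp
  moreover have "0 \<in> phi gs"
  proof -
    have "0 < n" by (rule assms(2))
    then show ?thesis unfolding phi_def using len by (auto intro!: image_eqI[of _ _ 0])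
  qed
  ultimately show ?thesis by (simp add: H0_def)
qed

lemma psi_GG:
  assumes S: "S \<in> H0 n k" and n: "0 < n"
  shows "psi k S \<in> GG n k \<and> phi (psi k S) = S"
proof -
  define xs where "xs = sorted_list_of_set S"
  define ys where "ys = xs @ [k]"
  have Ssub: "S \<subseteq> {0..<k}" and cS: "card S = n" and S0: "0 \<in> S" using S by (auto simp: H0_def)
  have finS: "finite S" using Ssub finite_subset by blast
  have sx: "sorted_wrt (<) xs" and setx: "set xs = S" and lenx: "length xs = n"
    using finS cS by (auto simp: xs_def)
  have xlt: "x < k" if "x \<in> set xs" for x using that setx Ssub by auto
  have sy: "sorted_wrt (<) ys" using sx xlt by (simp add: ys_def sorted_wrt_append)
  have leny: "length ys = Suc n" using lenx by (simp add: ys_def)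
  have ylt: "ys ! i < ys ! j" if "i < j" "j \<le> n" for i j
    using sy that leny unfolding sorted_wrt_iff_nth_less by auto
  have x0: "xs ! 0 = 0"
  proof -
    obtain i where i: "i < n" "xs ! i = 0" using S0 setx lenx by (metis in_set_conv_nth)
    have "xs ! 0 \<in> S" using n lenx setx nth_mem by fastforce
    then have "0 \<le> xs ! 0" using Ssub by auto
    moreover have "xs ! 0 \<le> xs ! i" using sx i lenx unfolding sorted_wrt_iff_nth_less
      by (metis le_less neq0_conv)
    ultimately show ?thesis using i by simp
  qed
  have y0: "ys ! 0 = 0" using x0 n lenx by (simp add: ys_def nth_append)
  have yn: "ys ! n = k" using lenx by (simp add: ys_def nth_append)
  define gs where "gs = psi k S"
  have gs: "gs = map (\<lambda>j. ys ! Suc j - ys ! j) [0..<n]"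
    unfolding gs_def psi_def xs_def[symmetric] ys_def[symmetric] Let_def lenx ..
  have leng: "length gs = n" by (simp add: gs)
  have pos: "\<forall>g\<in>set gs. 0 < g"
    using ylt by (auto simp: gs)
  have psy: "j \<le> n \<Longrightarrow> ps gs j = ys ! j" for j
  proof (induction j)
    case 0 then show ?case using y0 by simp
  next
    case (Suc j)
    then show ?case using ps_Suc[of j gs] leng by (simp add: gs)
  qed
  have "sum_list gs = k" using psy[of n] yn ps_len[of gs] leng by simp
  then have "gs \<in> GG n k" using leng pos by (simp add: GG_def)
  moreover have "phi gs = S"
  proof -
    have "phi gs = (\<lambda>j. ys ! j) ` {..<n}" unfolding phi_def leng using psy by auto
    also have "\<dots> = (\<lambda>j. xs ! j) ` {..<n}" using lenx by (auto simp: ys_def nth_append)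
    also have "\<dots> = set xs" using lenx by (auto simp: in_set_conv_nth)
    finally show ?thesis using setx by simp
  qed
  ultimately show ?thesis by (simp add: gs_def)
qed

lemma bij_phi:
  assumes "0 < n"
  shows "bij_betw phi (GG n k) (H0 n k)"
  by (rule bij_betw_byWitness[where f'="psi k"]) (use psi_phi phi_H0[OF _ assms] psi_GG[OF _ assms] in auto)




lemma adj_char:
  assumes "0 \<le> x" "x < y" "y < k" "\<forall>r\<in>a. 0 < r \<and> r < k"
  shows "F_adj a k x y \<longleftrightarrow> (y - x \<in> a \<or> k - (y - x) \<in> a)"
    and "F_adj a k y x \<longleftrightarrow> (y - x \<in> a \<or> k - (y - x) \<in> a)"
proof -
  have m1: "(y - x) mod k = y - x" using assms by simp
  have m2: "(x - y) mod k = k - (y - x)"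
  proof -
    have "(x - y) mod k = (x - y + k) mod k" by simp
    also have "\<dots> = x - y + k" using assms by (intro mod_pos_pos_trivial) auto
    finally show ?thesis by simp
  qed
  have m3: "r mod k = r" if "r \<in> a" for r
    using assms(4) that by (meson less_imp_le mod_pos_pos_trivial)
  show "F_adj a k x y \<longleftrightarrow> (y - x \<in> a \<or> k - (y - x) \<in> a)"
    unfolding F_adj_def m1 m2 using m3 assms(2) by (auto; metis)
  show "F_adj a k y x \<longleftrightarrow> (y - x \<in> a \<or> k - (y - x) \<in> a)"
    unfolding F_adj_def m1 m2 using m3 assms(2) by (auto; metis)
qed

definition validG :: "int set \<Rightarrow> int \<Rightarrow> int list \<Rightarrow> bool" where
  "validG a k gs \<longleftrightarrow> (\<forall>i j. i < j \<longrightarrow> j < length gs \<longrightarrow>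
      ps gs j - ps gs i \<notin> a \<and> k - (ps gs j - ps gs i) \<notin> a)"

lemma indep_phi:
  assumes gs: "gs \<in> GG n k" and n: "0 < n" and a: "\<forall>r\<in>a. 0 < r \<and> r < k"
  shows "F_independent a k (phi gs) \<longleftrightarrow> validG a k gs"
proof -
  have pos: "\<forall>g\<in>set gs. 0 < g" and len: "length gs = n" and sm: "sum_list gs = k"
    using gs by (auto simp: GG_def)
  have sub: "phi gs \<subseteq> {0..<k}" using phi_H0[OF gs n] by (simp add: H0_def)
  have rng: "0 \<le> ps gs i \<and> ps gs i < k" if "i < n" for i
    using sub that len by (auto simp: phi_def)
  have lt: "ps gs i < ps gs j" if "i < j" "j < n" for i j using ps_mono[OF pos that(1)] that len by simp
  have "(\<forall>x\<in>phi gs. \<forall>y\<in>phi gs. \<not> F_adj a k x y) \<longleftrightarrow> validG a k gs"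
  proof
    assume H: "\<forall>x\<in>phi gs. \<forall>y\<in>phi gs. \<not> F_adj a k x y"
    show "validG a k gs" unfolding validG_def
    proof (intro allI impI)
      fix i j assume ij: "i < j" "j < length gs"
      have "\<not> F_adj a k (ps gs i) (ps gs j)" using H ij len by (auto simp: phi_def)
      then show "ps gs j - ps gs i \<notin> a \<and> k - (ps gs j - ps gs i) \<notin> a"
        using adj_char(1)[of "ps gs i" "ps gs j" k a] rng lt ij len a by auto
    qed
  next
    assume V: "validG a k gs"
    show "\<forall>x\<in>phi gs. \<forall>y\<in>phi gs. \<not> F_adj a k x y"
    proof (intro ballI)
      fix x y assume "x \<in> phi gs" "y \<in> phi gs"
      then obtain i j where ij: "i < n" "j < n" "x = ps gs i" "y = ps gs j" by (auto simp: phi_def len)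
      consider "i < j" | "i = j" | "j < i" by arith
      then show "\<not> F_adj a k x y"
      proof cases
        case 1 then show ?thesis using V adj_char(1)[of "ps gs i" "ps gs j" k a] rng lt ij len a
          by (auto simp: validG_def)
      next
        case 2 then show ?thesis using ij by (simp add: F_adj_def)
      next
        case 3 then show ?thesis using V adj_char(2)[of "ps gs j" "ps gs i" k a] rng lt ij len a
          by (auto simp: validG_def)
      qed
    qed
  qed
  then show ?thesis using sub by (simp add: F_independent_def F_vertices_def)
qed

lemma hh_gaps:
  assumes n: "0 < n" and a: "\<forall>r\<in>a. 0 < r \<and> r < k"
  shows "hh a k n = card {gs\<in>GG n k. validG a k gs}"
proof -
  have bij: "bij_betw phi (GG n k) (H0 n k)" by (rule bij_phi[OF n])
  have inj: "inj_on phi {gs\<in>GG n k. validG a k gs}"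
    using bij by (auto simp: bij_betw_def intro: inj_on_subset)
  have img: "phi ` {gs\<in>GG n k. validG a k gs} = {S. F_independent a k S \<and> card S = n \<and> 0 \<in> S}"
  proof (intro set_eqI iffI)
    fix S assume "S \<in> phi ` {gs\<in>GG n k. validG a k gs}"
    then obtain gs where "gs \<in> GG n k" "validG a k gs" "S = phi gs" by auto
    then show "S \<in> {S. F_independent a k S \<and> card S = n \<and> 0 \<in> S}"
      using indep_phi[OF _ n a] phi_H0[OF _ n] by (auto simp: H0_def)
  next
    fix S assume S: "S \<in> {S. F_independent a k S \<and> card S = n \<and> 0 \<in> S}"
    then have "S \<in> H0 n k" using indep_sub by (auto simp: H0_def)
    then have "psi k S \<in> GG n k" "phi (psi k S) = S" using psi_GG[OF _ n] by auto
    then show "S \<in> phi ` {gs\<in>GG n k. validG a k gs}"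
      using indep_phi[OF _ n a, of "psi k S"] S by (auto intro!: image_eqI[of _ _ "psi k S"])
  qed
  show ?thesis unfolding hh_def img[symmetric] by (rule card_image[OF inj])
qed

lemma ps_sum: "j \<le> length gs \<Longrightarrow> ps gs j = (\<Sum>l<j. gs ! l)"
  unfolding ps_def by (simp add: sum_list_sum_nth atLeast0LessThan min_absorb2)

lemma ps_diff:
  assumes "i \<le> j" "j \<le> length gs"
  shows "ps gs j - ps gs i = (\<Sum>l\<in>{i..<j}. gs ! l)"
proof -
  have "(\<Sum>l\<in>{0..<i}. gs ! l) + (\<Sum>l\<in>{i..<j}. gs ! l) = (\<Sum>l\<in>{0..<j}. gs ! l)"
    by (rule sum.atLeastLessThan_concat) (use assms in auto)
  then show ?thesis using assms by (simp add: ps_sum atLeast0LessThan[symmetric])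
qed

lemma ps_comp:
  assumes "i \<le> j" "j \<le> length gs"
  shows "sum_list gs - (ps gs j - ps gs i) = (\<Sum>l\<in>{..<length gs} - {i..<j}. gs ! l)"
proof -
  have "sum_list gs = (\<Sum>l\<in>{..<length gs}. gs ! l)" by (simp add: sum_list_sum_nth atLeast0LessThan)
  also have "\<dots> = (\<Sum>l\<in>{..<length gs} - {i..<j}. gs ! l) + (\<Sum>l\<in>{i..<j}. gs ! l)"
    by (rule sum.subset_diff) (use assms in auto)
  finally show ?thesis using ps_diff[OF assms] by simp
qed

definition typf :: "int \<Rightarrow> int \<Rightarrow> int option" where
  "typf M g = (if g \<le> M then Some g else None)"

definition segT :: "int option list \<Rightarrow> nat set \<Rightarrow> int option" where
  "segT t I = (if \<forall>l\<in>I. t ! l \<noteq> None then Some (\<Sum>l\<in>I. the (t ! l)) else None)"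

lemma seg_typ:
  assumes pos: "\<forall>g\<in>set gs. 0 < g" and I: "I \<subseteq> {..<length gs}" and a: "\<forall>r\<in>a. r \<le> M"
  shows "(\<Sum>l\<in>I. gs ! l) \<in> a \<longleftrightarrow> segT (map (typf M) gs) I \<in> Some ` a"
proof (cases "\<forall>l\<in>I. map (typf M) gs ! l \<noteq> None")
  case True
  have "\<forall>l\<in>I. gs ! l \<le> M"
  proof
    fix l assume l: "l \<in> I"
    then have "l < length gs" using I by auto
    then have "typf M (gs ! l) \<noteq> None" using True l by (metis nth_map)
    then show "gs ! l \<le> M" by (simp add: typf_def split: if_splits)
  qed
  then have "(\<Sum>l\<in>I. the (map (typf M) gs ! l)) = (\<Sum>l\<in>I. gs ! l)"
    using I by (intro sum.cong) (auto simp: typf_def)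
  then show ?thesis using True by (auto simp: segT_def)
next
  case False
  then obtain l where l: "l \<in> I" "M < gs ! l" using I by (auto simp: typf_def split: if_splits)
  have finI: "finite I" using I finite_subset by blast
  have "gs ! l \<le> (\<Sum>l\<in>I. gs ! l)"
  proof (rule member_le_sum)
    show "l \<in> I" "finite I" using l finI by auto
    fix x assume "x \<in> I - {l}"
    then have "x < length gs" using I by auto
    then have "gs ! x \<in> set gs" by simp
    then show "0 \<le> gs ! x" using pos by fastforce
  qed
  then have "(\<Sum>l\<in>I. gs ! l) \<notin> a" using l a by force
  moreover have "segT (map (typf M) gs) I = None" unfolding segT_def using False by (rule if_not_P)
  ultimately show ?thesis by simp
qed

definition validT :: "int set \<Rightarrow> int option list \<Rightarrow> bool" where
  "validT a t \<longleftrightarrow> (\<forall>i j. i < j \<longrightarrow> j < length t \<longrightarrow>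
      segT t {i..<j} \<notin> Some ` a \<and> segT t ({..<length t} - {i..<j}) \<notin> Some ` a)"

lemma valid_typ:
  assumes gs: "gs \<in> GG n k" and a: "\<forall>r\<in>a. r \<le> M"
  shows "validG a k gs \<longleftrightarrow> validT a (map (typf M) gs)"
proof -
  have pos: "\<forall>g\<in>set gs. 0 < g" and sm: "sum_list gs = k"
    using gs by (auto simp: GG_def)
  have "(ps gs j - ps gs i \<notin> a \<and> k - (ps gs j - ps gs i) \<notin> a) \<longleftrightarrow>
        (segT (map (typf M) gs) {i..<j} \<notin> Some ` a \<and> segT (map (typf M) gs) ({..<length gs} - {i..<j}) \<notin> Some ` a)"
    if "i < j" "j < length gs" for i j
  proof -
    have "ps gs j - ps gs i = (\<Sum>l\<in>{i..<j}. gs ! l)" using ps_diff that by simp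
    moreover have "k - (ps gs j - ps gs i) = (\<Sum>l\<in>{..<length gs} - {i..<j}. gs ! l)"
      using ps_comp[of i j gs] that sm by simp
    moreover have "{i..<j} \<subseteq> {..<length gs}" "{..<length gs} - {i..<j} \<subseteq> {..<length gs}" using that by auto
    ultimately show ?thesis
      using seg_typ[OF pos _ a, of "{i..<j}"] seg_typ[OF pos _ a, of "{..<length gs} - {i..<j}"]
      by simp
  qed
  then show ?thesis unfolding validG_def validT_def by auto
qed




definition TT :: "int set \<Rightarrow> int \<Rightarrow> nat \<Rightarrow> int option list set" where
  "TT a M n = {t. length t = n \<and> set t \<subseteq> insert None (Some ` {1..M}) \<and> validT a t}"

lemma typ_E:
  assumes M: "0 \<le> M" and t: "set t \<subseteq> insert None (Some ` {1..M})" and gs: "gs \<in> E M t k"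
  shows "map (typf M) gs = t \<and> (\<forall>g\<in>set gs. 0 < g)"
proof -
  have len: "length gs = length t" and m: "\<forall>l<length t. matchT M (t!l) (gs!l)" using gs by (auto simp: E_def)
  have each: "typf M (gs ! l) = t ! l \<and> 0 < gs ! l" if "l < length t" for l
  proof -
    have tl: "t ! l \<in> insert None (Some ` {1..M})" using t nth_mem[OF that] by blast
    show ?thesis using m that tl M by (auto simp: matchT_def typf_def)
  qed
  have "map (typf M) gs = t" by (rule nth_equalityI) (use len each in auto)
  moreover have "\<forall>g\<in>set gs. 0 < g" using each len by (auto simp: in_set_conv_nth)
  ultimately show ?thesis by simp
qed

lemma typ_set:
  assumes "\<forall>g\<in>set gs. 0 < g"
  shows "set (map (typf M) gs) \<subseteq> insert None (Some ` {1..M})"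
  using assms by (auto simp: typf_def)

lemma E_typ:
  assumes "\<forall>g\<in>set gs. 0 < g"
  shows "gs \<in> E M (map (typf M) gs) (sum_list gs)"
  unfolding E_def by (auto simp: matchT_def typf_def)

lemma decomp:
  assumes M: "0 \<le> M" and a: "\<forall>r\<in>a. r \<le> M"
  shows "{gs\<in>GG n k. validG a k gs} = (\<Union>t\<in>TT a M n. E M t k)"
proof (intro set_eqI iffI)
  fix gs assume "gs \<in> {gs\<in>GG n k. validG a k gs}"
  then have gs: "gs \<in> GG n k" and v: "validG a k gs" by auto
  have pos: "\<forall>g\<in>set gs. 0 < g" and len: "length gs = n" and sm: "sum_list gs = k"
    using gs by (auto simp: GG_def)
  have "map (typf M) gs \<in> TT a M n"
    using typ_set[OF pos] valid_typ[OF gs a] v len by (simp add: TT_def)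
  moreover have "gs \<in> E M (map (typf M) gs) k" using E_typ[OF pos] sm by simp
  ultimately show "gs \<in> (\<Union>t\<in>TT a M n. E M t k)" by blast
next
  fix gs assume "gs \<in> (\<Union>t\<in>TT a M n. E M t k)"
  then obtain t where t: "t \<in> TT a M n" and gsE: "gs \<in> E M t k" by auto
  have ts: "set t \<subseteq> insert None (Some ` {1..M})" and lt: "length t = n" and vt: "validT a t"
    using t by (auto simp: TT_def)
  have mt: "map (typf M) gs = t" and pos: "\<forall>g\<in>set gs. 0 < g" using typ_E[OF M ts gsE] by auto
  have gs: "gs \<in> GG n k" using gsE pos lt by (auto simp: GG_def E_def)
  then show "gs \<in> {gs\<in>GG n k. validG a k gs}" using valid_typ[OF gs a] mt vt by simp
qed

lemma finite_TT: "finite (TT a M n)"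
proof (rule finite_subset)
  show "TT a M n \<subseteq> {t. set t \<subseteq> insert None (Some ` {1..M}) \<and> length t = n}"
    by (auto simp: TT_def)
  show "finite {t. set t \<subseteq> insert None (Some ` {1..M}) \<and> length t = n}"
    by (rule finite_lists_length_eq) simp
qed

lemma okT_TT: "t \<in> TT a M n \<Longrightarrow> okT t"
  by (auto simp: TT_def okT_def)

lemma card_decomp:
  assumes M: "0 \<le> M" and a: "\<forall>r\<in>a. r \<le> M"
  shows "card {gs\<in>GG n k. validG a k gs} = (\<Sum>t\<in>TT a M n. cnt M t k)"
proof -
  have "card (\<Union>t\<in>TT a M n. E M t k) = (\<Sum>t\<in>TT a M n. card (E M t k))"
  proof (rule card_UN_disjoint[OF finite_TT])
    show "\<forall>t\<in>TT a M n. finite (E M t k)" using E_card[OF okT_TT M] by blast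
    show "\<forall>t\<in>TT a M n. \<forall>t'\<in>TT a M n. t \<noteq> t' \<longrightarrow> E M t k \<inter> E M t' k = {}"
    proof (intro ballI impI)
      fix t t' assume tt: "t \<in> TT a M n" "t' \<in> TT a M n" "t \<noteq> t'"
      show "E M t k \<inter> E M t' k = {}"
      proof (rule ccontr)
        assume "E M t k \<inter> E M t' k \<noteq> {}"
        then obtain gs where "gs \<in> E M t k" "gs \<in> E M t' k" by auto
        then have "map (typf M) gs = t" "map (typf M) gs = t'"
          using typ_E[OF M] tt by (auto simp: TT_def)
        then show False using tt by simp
      qed
    qed
  qed
  also have "\<dots> = (\<Sum>t\<in>TT a M n. cnt M t k)"
    by (rule sum.cong[OF refl]) (use E_card[OF okT_TT M] in blast)
  finally show ?thesis using decomp[OF M a] by simp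
qed

lemma eventually_all:
  assumes "finite T" "\<forall>t\<in>T. \<exists>N::int. \<forall>k\<ge>N. P t k"
  shows "\<exists>N. \<forall>k\<ge>N. \<forall>t\<in>T. P t k"
  using assms
proof (induction T rule: finite_induct)
  case empty then show ?case by auto
next
  case (insert x T)
  obtain N1 where "\<forall>k\<ge>N1. P x k" using insert by auto
  moreover obtain N2 where "\<forall>k\<ge>N2. \<forall>t\<in>T. P t k" using insert by auto
  ultimately show ?case by (intro exI[of _ "max N1 N2"]) auto
qed




lemma t0_TT:
  assumes "\<forall>r\<in>a. r > 0"
  shows "replicate n None \<in> TT a M n"
proof -
  have seg: "segT (replicate n None) I \<notin> Some ` a" if "I \<subseteq> {..<n}" for I
  proof (cases "I = {}")
    case True then show ?thesis using assms by (auto simp: segT_def)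
  next
    case False then obtain l where l: "l \<in> I" by auto
    then have "l < n" using that by auto
    then have "replicate n (None::int option) ! l = None" by simp
    then have "\<not> (\<forall>l\<in>I. replicate n (None::int option) ! l \<noteq> None)" using l by blast
    then have "segT (replicate n None) I = None" unfolding segT_def by (rule if_not_P)
    then show ?thesis by simp
  qed
  have "validT a (replicate n None)" unfolding validT_def
  proof (intro allI impI conjI)
    fix i j assume "i < j" "j < length (replicate n (None::int option))"
    then have "{i..<j} \<subseteq> {..<n}" by auto
    then show "segT (replicate n None) {i..<j} \<notin> Some ` a" using seg by simp
    have "{..<length (replicate n (None::int option))} - {i..<j} \<subseteq> {..<n}" by auto
    then show "segT (replicate n None) ({..<length (replicate n (None::int option))} - {i..<j}) \<notin> Some ` a"
      using seg by simp
  qed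
  then show ?thesis unfolding TT_def by auto
qed

lemma poly_for_types:
  assumes M: "0 \<le> M" and t: "t \<in> TT a M n" and n: "0 < n"
  shows "\<exists>P. (\<exists>N. \<forall>k\<ge>N. rat_of_nat (cnt M t k) = poly P (of_int k))
        \<and> (t = replicate n None \<longrightarrow> degree P = n - 1 \<and> P \<noteq> 0)
        \<and> (t \<noteq> replicate n None \<longrightarrow> P = 0 \<or> degree P < n - 1)"
proof -
  have lt: "length t = n" using t by (simp add: TT_def)
  obtain c where cc: "rep (\<lambda>k. of_nat (cnt M t k)) c (nN t)
    \<and> (t \<noteq> [] \<and> set t \<subseteq> {None} \<longrightarrow> 0 < c (nN t - 1))"
    using cnt_rep[OF okT_TT[OF t] M] by (rule exE)
  note c = conjunct1[OF cc] and top = conjunct2[OF cc]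
  obtain P where PP: "(\<exists>N. \<forall>k\<ge>N. rat_of_nat (cnt M t k) = poly P (of_int k))
    \<and> degree P \<le> nN t - 1 \<and> (nN t = 0 \<longrightarrow> P = 0)
    \<and> (0 < nN t \<and> c (nN t - 1) \<noteq> 0 \<longrightarrow> degree P = nN t - 1 \<and> P \<noteq> 0)"
    using rep_poly[OF c] by (rule exE)
  note P = conjunct1[OF PP] and d1 = conjunct1[OF conjunct2[OF PP]]
    and d2 = conjunct1[OF conjunct2[OF conjunct2[OF PP]]]
    and d3 = conjunct2[OF conjunct2[OF conjunct2[OF PP]]]
  have A: "degree P = n - 1 \<and> P \<noteq> 0" if "t = replicate n None"
  proof -
    have "nN t = n" using that by (simp add: nN_def)
    moreover have "t \<noteq> []" "set t \<subseteq> {None}" using that n by auto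
    ultimately show ?thesis using top d3 n by simp
  qed
  have B: "P = 0 \<or> degree P < n - 1" if "t \<noteq> replicate n None"
  proof -
    have "\<exists>x\<in>set t. x \<noteq> None"
    proof (rule ccontr)
      assume "\<not> (\<exists>x\<in>set t. x \<noteq> None)"
      then have "replicate (length t) None = t" by (intro replicate_length_same) blast
      then show False using that lt by simp
    qed
    then obtain x where x: "x \<in> set t" "x \<noteq> None" by blast
    have "length (filter (\<lambda>x. x = None) t) < length t" by (rule length_filter_less[OF x(1)]) (use x(2) in simp)
    then have "nN t < n" unfolding nN_def using lt by simp
    then show ?thesis using d1 d2 by (cases "nN t = 0") auto
  qed
  have AB: "(t = replicate n None \<longrightarrow> degree P = n - 1 \<and> P \<noteq> 0)
        \<and> (t \<noteq> replicate n None \<longrightarrow> P = 0 \<or> degree P < n - 1)" using A B by simp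
  show ?thesis by (rule exI[of _ P], rule conjI[OF P AB])
qed

theorem lemma3p3:
  fixes a :: "int set" and n :: nat
  assumes "finite a" and "\<forall>r\<in>a. r > 0"
  shows "\<exists>P :: rat poly. \<exists>N :: int. degree P = n \<and>
           (\<forall>k::int. k \<ge> N \<and> k > 0 \<longrightarrow> of_nat (num_indep a k n) = poly P (of_int k))"
proof (cases "n = 0")
  case True
  have "num_indep a k n = 1" if "0 < k" for k
  proof -
    have "{S. F_independent a k S \<and> card S = 0} = {{}}"
    proof (intro set_eqI iffI)
      fix S assume "S \<in> {S. F_independent a k S \<and> card S = 0}"
      then have S: "F_independent a k S" "card S = 0" by auto
      have "finite S" using indep_sub[OF S(1)] by (rule finite_subset) simp
      then show "S \<in> {{}}" using S(2) by simp
    next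
      fix S :: "int set" assume "S \<in> {{}}"
      then show "S \<in> {S. F_independent a k S \<and> card S = 0}"
        by (simp add: F_independent_def F_adj_def)
    qed
    then show ?thesis using True by (simp add: num_indep_def)
  qed
  then have "\<forall>k::int. k \<ge> 0 \<and> k > 0 \<longrightarrow> of_nat (num_indep a k n) = poly [:1::rat:] (of_int k)" by simp
  moreover have "degree [:1::rat:] = n" using True by simp
  ultimately show ?thesis by blast
next
  case False
  then have n: "0 < n" by simp
  define M where "M = Max (insert 1 a)"
  have M1: "1 \<le> M" using assms(1) by (simp add: M_def)
  have aM: "\<forall>r\<in>a. 0 < r \<and> r \<le> M" using assms by (auto simp: M_def)
  define t0 :: "int option list" where "t0 = replicate n None"
  have ex: "\<forall>t\<in>TT a M n. \<exists>P. (\<exists>N. \<forall>k\<ge>N. rat_of_nat (cnt M t k) = poly P (of_int k))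
        \<and> (t = t0 \<longrightarrow> degree P = n - 1 \<and> P \<noteq> 0)
        \<and> (t \<noteq> t0 \<longrightarrow> P = 0 \<or> degree P < n - 1)"
  proof
    fix t assume "t \<in> TT a M n"
    from poly_for_types[OF _ this n] M1
    show "\<exists>P. (\<exists>N. \<forall>k\<ge>N. rat_of_nat (cnt M t k) = poly P (of_int k))
        \<and> (t = t0 \<longrightarrow> degree P = n - 1 \<and> P \<noteq> 0)
        \<and> (t \<noteq> t0 \<longrightarrow> P = 0 \<or> degree P < n - 1)" unfolding t0_def by simp
  qed
  obtain PP where PP: "\<forall>t\<in>TT a M n. (\<exists>N. \<forall>k\<ge>N. rat_of_nat (cnt M t k) = poly (PP t) (of_int k))
        \<and> (t = t0 \<longrightarrow> degree (PP t) = n - 1 \<and> PP t \<noteq> 0)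
        \<and> (t \<noteq> t0 \<longrightarrow> PP t = 0 \<or> degree (PP t) < n - 1)"
    using bchoice[OF ex] by (rule exE)
  have evt: "\<forall>t\<in>TT a M n. \<exists>N. \<forall>k\<ge>N. rat_of_nat (cnt M t k) = poly (PP t) (of_int k)"
    using PP by blast
  obtain N where N: "\<forall>k\<ge>N. \<forall>t\<in>TT a M n. rat_of_nat (cnt M t k) = poly (PP t) (of_int k)"
    using eventually_all[OF finite_TT evt] by (rule exE)
  have t0T: "t0 \<in> TT a M n" using t0_TT[OF assms(2)] by (simp add: t0_def)
  have PPt0: "degree (PP t0) = n - 1 \<and> PP t0 \<noteq> 0" using PP t0T by blast
  have PPo: "PP t = 0 \<or> degree (PP t) < n - 1" if "t \<in> TT a M n - {t0}" for t
    using PP that by blast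
  define R where "R = (\<Sum>t\<in>TT a M n - {t0}. PP t)"
  define Q where "Q = (\<Sum>t\<in>TT a M n. PP t)"
  have QR: "Q = R + PP t0" unfolding Q_def R_def
    using sum.remove[OF finite_TT t0T, of PP] by (simp add: add.commute)
  have R: "R = 0 \<or> degree R < degree (PP t0)"
  proof (cases "n - 1 = 0")
    case True
    then have "\<forall>t\<in>TT a M n - {t0}. PP t = 0" using PPo by simp
    then show ?thesis by (simp add: R_def)
  next
    case False
    have "degree R \<le> n - 2" unfolding R_def
    proof (rule degree_sum_le)
      show "finite (TT a M n - {t0})" using finite_TT by simp
      fix t assume "t \<in> TT a M n - {t0}"
      then show "degree (PP t) \<le> n - 2" using PPo[of t] False by auto
    qed
    then have "degree R < n - 1" using False by linarith
    then show ?thesis using PPt0 by simp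
  qed
  have Qd: "degree Q = n - 1 \<and> Q \<noteq> 0" using add_deg[OF R] PPt0 QR by simp
  define P where "P = smult (1 / of_nat n) (pCons 0 Q)"
  have "degree P = n" using Qd n by (simp add: P_def)
  moreover have "of_nat (num_indep a k n) = poly P (of_int k)" if k: "k \<ge> max N (M+1)" "k > 0" for k
  proof -
    have kM: "M + 1 \<le> k" using k(1) by simp
    have ak: "\<forall>r\<in>a. 0 < r \<and> r < k"
    proof
      fix r assume "r \<in> a"
      then have "0 < r" "r \<le> M" using aM by auto
      then show "0 < r \<and> r < k" using kM by linarith
    qed
    have "n * num_indep a k n = nat k * hh a k n" by (rule rotation_count) (use k in simp)
    also have "hh a k n = (\<Sum>t\<in>TT a M n. cnt M t k)"
      using hh_gaps[OF n ak] card_decomp[of M a n k] M1 aM by simp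
    finally have e0: "n * num_indep a k n = nat k * (\<Sum>t\<in>TT a M n. cnt M t k)" .
    have "rat_of_nat (n * num_indep a k n) = rat_of_nat (nat k * (\<Sum>t\<in>TT a M n. cnt M t k))"
      using e0 by (rule arg_cong)
    moreover have "rat_of_nat (nat k) = of_int k" using k by simp
    ultimately have e: "rat_of_nat n * rat_of_nat (num_indep a k n) = of_int k * (\<Sum>t\<in>TT a M n. rat_of_nat (cnt M t k))"
      by (simp only: of_nat_mult of_nat_sum)
    have "(\<Sum>t\<in>TT a M n. rat_of_nat (cnt M t k)) = poly Q (of_int k)"
      unfolding Q_def poly_sum
    proof (rule sum.cong[OF refl])
      fix t assume "t \<in> TT a M n"
      moreover have "k \<ge> N" using k by simp
      ultimately show "rat_of_nat (cnt M t k) = poly (PP t) (of_int k)" using N by blast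
    qed
    note SQ = this
    have nz: "rat_of_nat n \<noteq> 0" using n by simp
    have "rat_of_nat (num_indep a k n) = of_int k * poly Q (of_int k) / of_nat n"
      using e SQ nz by (simp add: eq_divide_eq mult.commute)
    moreover have "poly P (of_int k) = of_int k * poly Q (of_int k) / of_nat n"
      by (simp add: P_def)
    ultimately show ?thesis by simp
  qed
  ultimately show ?thesis
    by (intro exI[of _ P] exI[of _ "max N (M+1)"] conjI allI impI) (simp_all only:)
qed


end
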